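(* Let $M$ be a path-connected pre-$\Delta$-monoid with identity $e$. If $M$ does not have well-defined infinite $\pi_1$-products at $e$, then $M$ does not have well-defined infinite $\pi_1$-products at any of its points.
   Context: A pre-$\Delta$-monoid is a space $M$ with an associative operation $\ast$ with identity $e$ such that for any continuous paths $\alpha,\beta:[0,1]\to M$, the pointwise product $t\mapsto\alpha(t)\ast\beta(t)$ is continuous. A sequence of loops $\alpha_n\in\Omega(X,x)$ is a null-sequence if every neighborhood of $x$ contains $\mathrm{Im}(\alpha_n)$ for all but finitely many $n$; its infinite concatenation $\prod_{n=1}^\infty\alpha_n$ is the loop equal to (a linear reparametrization of) $\alpha_n$ on $[\frac{n-1}{n},\frac{n}{n+1}]$ and sending $1$ to $x$. $X$ has well-defined infinite $\pi_1$-products at $x$ if for all null-sequences $\alpha_n,\beta_n\in\Omega(X,x)$ with $\alpha_n\simeq\beta_n$ (path-homotopic) for every $n$, we have $\prod_{n=1}^\infty\alpha_n\simeq\prod_{n=1}^\infty\beta_n$. *)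

theory Defs
  imports "HOL-Analysis.Analysis"
begin

text \<open>The space M is the topological space given by a type 'a (carrier UNIV).
  Paths are maps real \<Rightarrow> 'a continuous on [0,1] (library notion path).\<close>

definition pre_delta_monoid :: "('a::topological_space \<Rightarrow> 'a \<Rightarrow> 'a) \<Rightarrow> 'a \<Rightarrow> bool" where
  "pre_delta_monoid prd e \<longleftrightarrow>
     (\<forall>a b c. prd (prd a b) c = prd a (prd b c)) \<and>
     (\<forall>a. prd e a = a \<and> prd a e = a) \<and>
     (\<forall>\<alpha> \<beta>. path \<alpha> \<and> path \<beta> \<longrightarrow> path (\<lambda>t. prd (\<alpha> t) (\<beta> t)))"

definition loop_at :: "'a::topological_space \<Rightarrow> (real \<Rightarrow> 'a) \<Rightarrow> bool" where
  "loop_at x \<alpha> \<longleftrightarrow> path \<alpha> \<and> pathstart \<alpha> = x \<and> pathfinish \<alpha> = x"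

text \<open>Sequences are indexed by n \<ge> 1; the value at index 0 is ignored.\<close>
definition null_sequence :: "'a::topological_space \<Rightarrow> (nat \<Rightarrow> real \<Rightarrow> 'a) \<Rightarrow> bool" where
  "null_sequence x \<alpha> \<longleftrightarrow>
     (\<forall>n\<ge>1. loop_at x (\<alpha> n)) \<and>
     (\<forall>U. open U \<and> x \<in> U \<longrightarrow> (\<forall>\<^sub>F n in sequentially. path_image (\<alpha> n) \<subseteq> U))"

text \<open>Infinite concatenation: on [(n-1)/n, n/(n+1)] it is \<alpha> n linearly reparametrized;
  for t in [0,1) the index is n = floor(1/(1-t)), i.e. the n with (n-1)/n \<le> t < n/(n+1);
  the length of that interval is 1/(n(n+1)). The point 1 is sent to x.\<close>
definition inf_concat :: "'a \<Rightarrow> (nat \<Rightarrow> real \<Rightarrow> 'a) \<Rightarrow> real \<Rightarrow> 'a" where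
  "inf_concat x \<alpha> t =
     (if t \<ge> 1 then x
      else (let n = nat \<lfloor>1 / (1 - t)\<rfloor>
            in \<alpha> n ((t - (real n - 1) / real n) * (real n * (real n + 1)))))"

definition wd_inf_pi1_products :: "'a::topological_space \<Rightarrow> bool" where
  "wd_inf_pi1_products x \<longleftrightarrow>
     (\<forall>\<alpha> \<beta>. null_sequence x \<alpha> \<and> null_sequence x \<beta> \<and>
             (\<forall>n\<ge>1. homotopic_paths UNIV (\<alpha> n) (\<beta> n))
         \<longrightarrow> homotopic_paths UNIV (inf_concat x \<alpha>) (inf_concat x \<beta>))"

end

theory Submission
  imports Defs
begin


lemma idx_eq:
  fixes n :: nat and t :: real
  assumes n: "n \<ge> 1" and t1: "(real n - 1) / real n \<le> t" and t2: "t < real n / (real n + 1)"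
  shows "nat \<lfloor>1 / (1 - t)\<rfloor> = n"
proof -
  have np: "real n > 0" using n by simp
  have a: "1 - t \<le> 1 / real n" using t1 np by (simp add: field_simps)
  have b: "1 / (real n + 1) < 1 - t" using t2 np by (simp add: field_simps)
  have pos: "1 - t > 0" using b np by (smt (verit) divide_pos_pos)
  have c: "real n \<le> 1 / (1 - t)" using a pos np by (simp add: field_simps)
  have d: "1 / (1 - t) < real n + 1" using b pos np by (simp add: field_simps)
  have "\<lfloor>1 / (1 - t)\<rfloor> = int n" using c d by (simp add: floor_eq_iff)
  then show ?thesis by simp
qed

lemma inf_concat_seg:
  fixes n :: nat and t :: real
  assumes n: "n \<ge> 1" and t: "0 \<le> t" "t < 1"
  shows "inf_concat x \<alpha> ((real n - 1) / real n + t / (real n * (real n + 1))) = \<alpha> n t"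
proof -
  let ?s = "(real n - 1) / real n + t / (real n * (real n + 1))"
  have np: "real n > 0" using n by simp
  have s1: "(real n - 1) / real n \<le> ?s" using t np by simp
  have s2: "?s < real n / (real n + 1)"
  proof -
    have q: "real n * (real n + 1) > 0" using np by simp
    have "?s = (real n * real n - 1 + t) / (real n * (real n + 1))"
      using q np by (simp add: divide_simps) (simp add: algebra_simps)
    also have "\<dots> < (real n * real n) / (real n * (real n + 1))"
      using t np by (intro divide_strict_right_mono) auto
    also have "\<dots> = real n / (real n + 1)" using np by simp
    finally show ?thesis .
  qed
  have s3: "?s < 1" using s2 np by (smt (verit) divide_less_eq_1_pos)
  have idx: "nat \<lfloor>1 / (1 - ?s)\<rfloor> = n" using idx_eq[OF n s1 s2] .
  have "(?s - (real n - 1) / real n) * (real n * (real n + 1)) = t" using np by simp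
  then show ?thesis using s3 idx unfolding inf_concat_def Let_def by simp
qed

lemma inf_concat_seg1:
  fixes n :: nat and t :: real
  assumes n: "n \<ge> 1" and t: "0 \<le> t" "t \<le> 1"
    and cons: "\<alpha> n 1 = \<alpha> (Suc n) 0"
  shows "inf_concat x \<alpha> ((real n - 1) / real n + t / (real n * (real n + 1))) = \<alpha> n t"
proof (cases "t < 1")
  case True show ?thesis by (rule inf_concat_seg[OF n t(1) True])
next
  case False
  then have t1: "t = 1" using t by simp
  have np: "real n > 0" using n by simp
  have "(real n - 1) / real n + 1 / (real n * (real n + 1)) = real n / (real n + 1)"
    using np by (simp add: divide_simps) (simp add: algebra_simps)
  then have "(real n - 1) / real n + 1 / (real n * (real n + 1)) = (real (Suc n) - 1) / real (Suc n) + 0 / (real (Suc n) * (real (Suc n) + 1))"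
    by (simp add: add.commute)
  then have "inf_concat x \<alpha> ((real n - 1) / real n + t / (real n * (real n + 1))) = \<alpha> (Suc n) 0"
    using inf_concat_seg[of "Suc n" 0 x \<alpha>] t1 by simp
  then show ?thesis using cons t1 by simp
qed

lemma decomp:
  fixes y :: real
  assumes y: "0 \<le> y" "y < 1"
  shows "\<exists>n t. n \<ge> 1 \<and> 0 \<le> t \<and> t < 1 \<and> y = (real n - 1) / real n + t / (real n * (real n + 1))
              \<and> real n \<le> 1 / (1 - y) \<and> 1 / (1 - y) < real n + 1"
proof -
  define n where "n = nat \<lfloor>1 / (1 - y)\<rfloor>"
  have pos: "1 - y > 0" using y by simp
  have ge1: "1 / (1 - y) \<ge> 1" using y pos by (simp add: field_simps)
  have fl: "real_of_int \<lfloor>1 / (1 - y)\<rfloor> \<le> 1 / (1 - y)" "1 / (1 - y) < real_of_int \<lfloor>1 / (1 - y)\<rfloor> + 1"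
    by linarith+
  have flpos: "\<lfloor>1 / (1 - y)\<rfloor> \<ge> 1" using ge1 by linarith
  have rn: "real n = real_of_int \<lfloor>1 / (1 - y)\<rfloor>" unfolding n_def using flpos y by (subst of_nat_nat) auto
  have n1: "n \<ge> 1" unfolding n_def using flpos by linarith
  have np: "real n > 0" using n1 by simp
  have a: "real n \<le> 1 / (1 - y)" using fl rn by simp
  have b: "1 / (1 - y) < real n + 1" using fl rn by simp
  define t where "t = (y - (real n - 1) / real n) * (real n * (real n + 1))"
  have a': "1 - y \<le> 1 / real n" using a pos np by (simp add: field_simps)
  have b': "1 / (real n + 1) < 1 - y" using b pos np by (simp add: field_simps)
  have t0: "0 \<le> t" unfolding t_def using a' np
    by (intro mult_nonneg_nonneg) (auto simp: field_simps)
  have "y < real n / (real n + 1)" using b' np by (simp add: field_simps)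
  then have "y - (real n - 1) / real n < real n / (real n + 1) - (real n - 1) / real n" by simp
  also have "\<dots> = 1 / (real n * (real n + 1))" using np by (simp add: divide_simps) (simp add: algebra_simps)
  finally have "y - (real n - 1) / real n < 1 / (real n * (real n + 1))" .
  moreover have q: "real n * (real n + 1) > 0" using np by simp
  ultimately have t1: "t < 1" unfolding t_def using pos_less_divide_eq[OF q] by blast
  have ye: "y = (real n - 1) / real n + t / (real n * (real n + 1))" unfolding t_def using np by simp
  show ?thesis using n1 t0 t1 ye a b by blast
qed

lemma inf_concat_path:
  fixes x :: "'a::topological_space"
  assumes paths: "\<And>n. n \<ge> 1 \<Longrightarrow> path (\<alpha> n)"
    and cons: "\<And>n. n \<ge> 1 \<Longrightarrow> pathfinish (\<alpha> n) = pathstart (\<alpha> (Suc n))"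
    and nul: "\<And>U. open U \<Longrightarrow> x \<in> U \<Longrightarrow> (\<forall>\<^sub>F n in sequentially. path_image (\<alpha> n) \<subseteq> U)"
  shows "path (inf_concat x \<alpha>)"
proof -
  let ?f = "inf_concat x \<alpha>"
  have seg: "continuous_on {(real n - 1) / real n .. real n / (real n + 1)} ?f" if n: "n \<ge> 1" for n
  proof -
    have np: "real n > 0" using n by simp
    let ?g = "\<lambda>s. \<alpha> n ((s - (real n - 1) / real n) * (real n * (real n + 1)))"
    have im: "(s - (real n - 1) / real n) * (real n * (real n + 1)) \<in> {0..1}"
      if s: "s \<in> {(real n - 1) / real n .. real n / (real n + 1)}" for s
    proof -
      have "s - (real n - 1) / real n \<le> real n / (real n + 1) - (real n - 1) / real n" using s by simp
      also have "\<dots> = 1 / (real n * (real n + 1))" using np by (simp add: divide_simps) (simp add: algebra_simps)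
      finally have "s - (real n - 1) / real n \<le> 1 / (real n * (real n + 1))" .
      moreover have q: "real n * (real n + 1) > 0" using np by simp
      ultimately have "(s - (real n - 1) / real n) * (real n * (real n + 1)) \<le> 1"
        using pos_le_divide_eq[OF q] by blast
      moreover have "0 \<le> (s - (real n - 1) / real n) * (real n * (real n + 1))" using s np by simp
      ultimately show ?thesis by simp
    qed
    have cg: "continuous_on {(real n - 1) / real n .. real n / (real n + 1)} ?g"
      by (rule continuous_on_compose2[OF paths[OF n, unfolded path_def]], intro continuous_intros) (use im in blast)
    show ?thesis
    proof (rule continuous_on_eq[OF cg])
      fix s assume s: "s \<in> {(real n - 1) / real n .. real n / (real n + 1)}"
      define t where "t = (s - (real n - 1) / real n) * (real n * (real n + 1))"
      have t: "0 \<le> t" "t \<le> 1" using im[OF s] unfolding t_def by auto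
      have se: "s = (real n - 1) / real n + t / (real n * (real n + 1))" unfolding t_def using np by simp
      have c: "\<alpha> n 1 = \<alpha> (Suc n) 0" using cons[OF n] by (simp add: pathstart_def pathfinish_def)
      have "?f s = \<alpha> n t" using inf_concat_seg1[OF n t c, of x] se by simp
      moreover have "?g s = \<alpha> n t" unfolding t_def by simp
      ultimately show "?g s = ?f s" by simp
    qed
  qed
  have init: "continuous_on {0 .. real N / (real N + 1)} ?f" if "N \<ge> 1" for N
    using that
  proof (induction N rule: nat_induct_at_least)
    case base
    then show ?case using seg[of 1] by simp
  next
    case (Suc N)
    have np: "real N > 0" using Suc by simp
    have le: "real N / (real N + 1) \<le> real (Suc N) / (real (Suc N) + 1)"
      using np by (simp add: divide_simps) (simp add: algebra_simps)
    have lp: "(real (Suc N) - 1) / real (Suc N) = real N / (real N + 1)" by (simp add: add.commute)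
    have gen: "\<And>a b::real. 0 \<le> a \<Longrightarrow> a \<le> b \<Longrightarrow> {0..b} = {0..a} \<union> {a..b}" by auto
    have eq: "{0 .. real (Suc N) / (real (Suc N) + 1)} = {0 .. real N / (real N + 1)} \<union> {(real (Suc N) - 1) / real (Suc N) .. real (Suc N) / (real (Suc N) + 1)}"
      unfolding lp by (rule gen) (use le in auto)
    show ?case unfolding eq
      by (rule continuous_on_closed_Un) (use Suc seg[of "Suc N"] in auto)
  qed
  have "continuous (at t within {0..1}) ?f" if t: "t \<in> {0..1}" for t
  proof (cases "t < 1")
    case True
    obtain N where N: "1 / (1 - t) < real N" using reals_Archimedean2 by blast
    have pos: "1 - t > 0" using True by simp
    have "1 < real N * (1 - t)" using N pos by (simp add: field_simps)
    then have N1: "N \<ge> 1" by (cases N) auto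
    have Np: "real N > 0" using N1 by simp
    have tb: "t < real N / (real N + 1)" using \<open>1 < real N * (1 - t)\<close> t Np by (simp add: field_simps)
    have cN: "continuous_on {0 .. real N / (real N + 1)} ?f" using init[OF N1] .
    show ?thesis unfolding continuous_within_topological
    proof (intro allI impI)
      fix B assume B: "open B" "?f t \<in> B"
      obtain A where A: "open A" "t \<in> A" "\<forall>y\<in>{0 .. real N / (real N + 1)}. y \<in> A \<longrightarrow> ?f y \<in> B"
      proof -
        have tm: "t \<in> {0 .. real N / (real N + 1)}" using t tb by simp
        show ?thesis using cN[unfolded continuous_on_topological, rule_format, OF tm B(1) B(2)] that by blast
      qed
      show "\<exists>A. open A \<and> t \<in> A \<and> (\<forall>y\<in>{0..1}. y \<in> A \<longrightarrow> ?f y \<in> B)"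
        by (rule exI[of _ "A \<inter> {..< real N / (real N + 1)}"]) (use A tb in auto)
    qed
  next
    case False
    then have t1: "t = 1" using t by simp
    show ?thesis unfolding continuous_within_topological t1
    proof (intro allI impI)
      fix B assume B: "open B" "?f 1 \<in> B"
      have xB: "x \<in> B" using B by (simp add: inf_concat_def)
      obtain N where N: "\<And>n. n \<ge> N \<Longrightarrow> path_image (\<alpha> n) \<subseteq> B"
        using nul[OF B(1) xB] unfolding eventually_sequentially by blast
      define M where "M = max N 1"
      have Mp: "real M > 0" unfolding M_def by simp
      show "\<exists>A. open A \<and> 1 \<in> A \<and> (\<forall>y\<in>{0..1}. y \<in> A \<longrightarrow> ?f y \<in> B)"
      proof (intro exI[of _ "{(real M - 1) / real M <..}"] conjI ballI impI)
        show "1 \<in> {(real M - 1) / real M <..}" using Mp by simp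
        fix y assume y: "y \<in> {0..1}" "y \<in> {(real M - 1) / real M <..}"
        show "?f y \<in> B"
        proof (cases "y < 1")
          case False then show ?thesis using xB by (simp add: inf_concat_def)
        next
          case True
          obtain n t where nt: "n \<ge> 1" "0 \<le> t" "t < 1" "y = (real n - 1) / real n + t / (real n * (real n + 1))"
            "real n \<le> 1 / (1 - y)" "1 / (1 - y) < real n + 1"
            using decomp[of y] y True by auto
          have pos: "1 - y > 0" using True by simp
          have "1 - y < 1 / real M" using y(2) Mp by (simp add: field_simps)
          then have "real M < 1 / (1 - y)" using pos Mp by (simp add: field_simps)
          then have "real M < real n + 1" using nt by simp
          then have "n \<ge> N" unfolding M_def by linarith
          then have "path_image (\<alpha> n) \<subseteq> B" using N by blast
          moreover have "\<alpha> n t \<in> path_image (\<alpha> n)" using nt by (simp add: path_image_def)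
          moreover have "?f y = \<alpha> n t" using inf_concat_seg[OF nt(1) nt(2) nt(3)] nt(4) by simp
          ultimately show ?thesis by auto
        qed
      qed (simp)
    qed
  qed
  then show ?thesis unfolding path_def continuous_on_eq_continuous_within by blast
qed



lemma pre_delta_cont2:
  fixes f g :: "'b::real_normed_vector \<Rightarrow> 'a::topological_space"
  assumes pd: "pre_delta_monoid prd e" and S: "convex S"
    and f: "continuous_on S f" and g: "continuous_on S g"
  shows "continuous_on S (\<lambda>z. prd (f z) (g z))"
proof (rule continuous_on_sequentiallyI)
  fix u a assume u: "\<forall>n. u n \<in> S" and a: "a \<in> S" and lim: "u \<longlonglongrightarrow> a"
  define \<beta> where "\<beta> = (\<lambda>n. linepath (u (n - 1)) (u n))"
  define p where "p = inf_concat a \<beta>"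
  have pp: "path p" unfolding p_def
  proof (rule inf_concat_path)
    fix n :: nat assume "n \<ge> 1" then show "path (\<beta> n)" unfolding \<beta>_def by simp
  next
    fix n :: nat assume "n \<ge> 1" then show "pathfinish (\<beta> n) = pathstart (\<beta> (Suc n))" unfolding \<beta>_def by simp
  next
    fix U assume U: "open U" "a \<in> U"
    obtain r where r: "r > 0" "ball a r \<subseteq> U" using U open_contains_ball by blast
    have "\<forall>\<^sub>F n in sequentially. u n \<in> ball a r"
      using lim r(1) unfolding tendsto_iff by (simp add: dist_commute)
    then obtain N where N: "\<And>n. n \<ge> N \<Longrightarrow> u n \<in> ball a r" unfolding eventually_sequentially by blast
    show "\<forall>\<^sub>F n in sequentially. path_image (\<beta> n) \<subseteq> U"
      unfolding eventually_sequentially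
    proof (intro exI[of _ "Suc N"] allI impI)
      fix n assume n: "Suc N \<le> n"
      have "closed_segment (u (n - 1)) (u n) \<subseteq> ball a r"
        by (rule closed_segment_subset) (use N n in auto)
      then show "path_image (\<beta> n) \<subseteq> U" unfolding \<beta>_def using r by auto
    qed
  qed
  have pS: "p y \<in> S" if y: "y \<in> {0..1}" for y
  proof (cases "y < 1")
    case False then have "p y = a" unfolding p_def inf_concat_def using y by simp
    then show ?thesis using a by simp
  next
    case True
    obtain n t where nt: "n \<ge> 1" "0 \<le> t" "t < 1" "y = (real n - 1) / real n + t / (real n * (real n + 1))"
      using decomp[of y] y True by auto
    have "p y = \<beta> n t" unfolding p_def using inf_concat_seg[OF nt(1) nt(2) nt(3)] nt(4) by simp
    moreover have "closed_segment (u (n - 1)) (u n) \<subseteq> S"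
      by (rule closed_segment_subset) (use u S in auto)
    moreover have "\<beta> n t \<in> closed_segment (u (n - 1)) (u n)"
      unfolding \<beta>_def using nt(2,3) path_image_linepath[of "u (n - 1)" "u n"]
      unfolding path_image_def by auto
    ultimately show ?thesis by auto
  qed
  have pc: "continuous_on {0..1} p" using pp by (simp add: path_def)
  have fp: "path (\<lambda>t. f (p t))" unfolding path_def
    by (rule continuous_on_compose2[OF f pc]) (use pS in auto)
  have gp: "path (\<lambda>t. g (p t))" unfolding path_def
    by (rule continuous_on_compose2[OF g pc]) (use pS in auto)
  have q: "path (\<lambda>t. prd (f (p t)) (g (p t)))"
    using pd fp gp unfolding pre_delta_monoid_def by blast
  define \<tau> where "\<tau> = (\<lambda>k::nat. (real (Suc k) - 1) / real (Suc k))"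
  have \<tau>eq: "\<tau> k = 1 + - inverse (real (Suc k))" for k
    unfolding \<tau>_def by (simp add: divide_simps)
  have \<tau>lim: "\<tau> \<longlonglongrightarrow> 1" unfolding \<tau>eq[abs_def] by (rule LIMSEQ_inverse_real_of_nat_add_minus)
  have \<tau>in: "\<tau> k \<in> {0..1}" for k unfolding \<tau>_def by auto
  have p\<tau>: "p (\<tau> k) = u k" for k
  proof -
    have "p (\<tau> k) = \<beta> (Suc k) 0" unfolding p_def \<tau>_def using inf_concat_seg[of "Suc k" 0 a \<beta>] by simp
    then show ?thesis unfolding \<beta>_def by (simp add: linepath_def)
  qed
  have p1: "p 1 = a" unfolding p_def inf_concat_def by simp
  have "(\<lambda>k. prd (f (p (\<tau> k))) (g (p (\<tau> k)))) \<longlonglongrightarrow> prd (f (p 1)) (g (p 1))"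
    by (rule continuous_on_tendsto_compose[OF q[unfolded path_def] \<tau>lim]) (use \<tau>in in auto)
  then show "(\<lambda>n. prd (f (u n)) (g (u n))) \<longlonglongrightarrow> prd (f a) (g a)"
    unfolding p\<tau> p1 .
qed



lemma cont_sq: "convex ({0..1::real} \<times> {0..1::real})"
  by (intro convex_Times convex_real_interval)

lemma hp_mult_right:
  assumes pd: "pre_delta_monoid prd e" and h: "homotopic_paths UNIV p q"
  shows "homotopic_paths UNIV (\<lambda>t. prd (p t) c) (\<lambda>t. prd (q t) c)"
proof -
  obtain h where h: "continuous_on ({0..1} \<times> {0..1}) h"
      "\<forall>x \<in> {0..1}. h(0,x) = p x" "\<forall>x \<in> {0..1}. h(1,x) = q x"
      "\<forall>t \<in> {0..1::real}. pathstart(h \<circ> Pair t) = pathstart p \<and> pathfinish(h \<circ> Pair t) = pathfinish p"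
    using h unfolding homotopic_paths by blast
  have c: "continuous_on ({0..1} \<times> {0..1}) (\<lambda>z. prd (h z) c)"
    by (rule pre_delta_cont2[OF pd cont_sq h(1) continuous_on_const])
  show ?thesis unfolding homotopic_paths
    by (rule exI[of _ "\<lambda>z. prd (h z) c"]) (use c h in \<open>auto simp: pathstart_def pathfinish_def\<close>)
qed

lemma conj_hom:
  assumes pd: "pre_delta_monoid prd e" and A: "path A" "A 0 = e" "A 1 = e"
    and g: "path \<gamma>" "\<gamma> 0 = e"
  shows "homotopic_paths UNIV A (\<gamma> +++ ((\<lambda>t. prd (A t) (\<gamma> 1)) +++ reversepath \<gamma>))"
proof -
  have ide: "\<And>a. prd e a = a" "\<And>a. prd a e = a" using pd unfolding pre_delta_monoid_def by blast+
  define \<rho> :: "real \<Rightarrow> real" where "\<rho> = (\<lambda>t. max 0 (min 1 (4 * t - 2)))"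
  define lam :: "real \<Rightarrow> real" where "lam = (\<lambda>t. min (2 * t) (min 1 (4 - 4 * t)))"
  have \<rho>01: "\<rho> t \<in> {0..1}" for t unfolding \<rho>_def by auto
  have lam01: "t \<in> {0..1} \<Longrightarrow> lam t \<in> {0..1}" for t unfolding lam_def by auto
  let ?S = "{0..1::real} \<times> {0..1::real}"
  let ?u = "\<lambda>z::real\<times>real. (1 - fst z) * snd z + fst z * \<rho> (snd z)"
  let ?v = "\<lambda>z::real\<times>real. fst z * lam (snd z)"
  have u01: "?u z \<in> {0..1}" if z: "z \<in> ?S" for z
  proof -
    obtain s t where st: "z = (s, t)" "0 \<le> s" "s \<le> 1" "0 \<le> t" "t \<le> 1" using z by auto
    have r: "0 \<le> \<rho> t" "\<rho> t \<le> 1" using \<rho>01[of t] by auto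
    have "0 \<le> (1 - s) * t + s * \<rho> t" using st r by simp
    moreover have "(1 - s) * t + s * \<rho> t \<le> (1 - s) * 1 + s * 1"
      using st r by (intro add_mono mult_left_mono) auto
    ultimately show ?thesis using st by simp
  qed
  have v01: "?v z \<in> {0..1}" if z: "z \<in> ?S" for z
  proof -
    obtain s t where st: "z = (s, t)" "0 \<le> s" "s \<le> 1" "0 \<le> t" "t \<le> 1" using z by auto
    have r: "0 \<le> lam t" "lam t \<le> 1" using lam01[of t] st by auto
    have "s * lam t \<le> 1 * 1" using st r by (intro mult_mono) auto
    then show ?thesis using st r by simp
  qed
  have cu0: "continuous_on ?S ?u" unfolding \<rho>_def by (intro continuous_intros)
  have cv0: "continuous_on ?S ?v" unfolding lam_def by (intro continuous_intros)
  have cu: "continuous_on ?S (\<lambda>z. A (?u z))"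
    by (rule continuous_on_compose2[OF A(1)[unfolded path_def] cu0]) (use u01 in blast)
  have cv: "continuous_on ?S (\<lambda>z. \<gamma> (?v z))"
    by (rule continuous_on_compose2[OF g(1)[unfolded path_def] cv0]) (use v01 in blast)
  have c: "continuous_on ?S (\<lambda>z. prd (A (?u z)) (\<gamma> (?v z)))"
    by (rule pre_delta_cont2[OF pd cont_sq cu cv])
  have eq: "prd (A (\<rho> t)) (\<gamma> (lam t)) = (\<gamma> +++ ((\<lambda>t. prd (A t) (\<gamma> 1)) +++ reversepath \<gamma>)) t"
    if t: "t \<in> {0..1}" for t
  proof (cases "t \<le> 1/2")
    case True
    then have "\<rho> t = 0" "lam t = 2 * t" unfolding \<rho>_def lam_def by auto
    then show ?thesis using True A ide by (simp add: joinpaths_def)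
  next
    case False
    show ?thesis
    proof (cases "t \<le> 3/4")
      case True
      then have "\<rho> t = 2 * (2 * t - 1)" "lam t = 1" unfolding \<rho>_def lam_def using False by auto
      then show ?thesis using True False by (simp add: joinpaths_def)
    next
      case F2: False
      then have "\<rho> t = 1" "lam t = 1 - (2 * (2 * t - 1) - 1)" unfolding \<rho>_def lam_def using False by auto
      then show ?thesis using F2 False A ide by (simp add: joinpaths_def reversepath_def)
    qed
  qed
  have l1: "lam 1 = 0" "\<rho> 1 = 1" "lam 0 = 0" "\<rho> 0 = 0" unfolding lam_def \<rho>_def by auto
  show ?thesis unfolding homotopic_paths
  proof (intro exI[of _ "\<lambda>z. prd (A (?u z)) (\<gamma> (?v z))"] conjI ballI)
    show "continuous_on ?S (\<lambda>z. prd (A (?u z)) (\<gamma> (?v z)))" by (rule c)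
    show "(\<lambda>z. prd (A (?u z)) (\<gamma> (?v z))) \<in> ?S \<rightarrow> UNIV" by simp
  next
    fix t :: real assume "t \<in> {0..1}"
    show "prd (A (?u (0, t))) (\<gamma> (?v (0, t))) = A t" using g ide by simp
  next
    fix t :: real assume t: "t \<in> {0..1}"
    show "prd (A (?u (1, t))) (\<gamma> (?v (1, t))) = (\<gamma> +++ ((\<lambda>t. prd (A t) (\<gamma> 1)) +++ reversepath \<gamma>)) t"
      using eq[OF t] by simp
  next
    fix s :: real assume s: "s \<in> {0..1}"
    show "pathstart ((\<lambda>z. prd (A (?u z)) (\<gamma> (?v z))) \<circ> Pair s) = pathstart A"
      using l1 A g ide by (simp add: pathstart_def)
    show "pathfinish ((\<lambda>z. prd (A (?u z)) (\<gamma> (?v z))) \<circ> Pair s) = pathfinish A"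
      using l1 A g ide by (simp add: pathfinish_def)
  qed
qed

lemma null_path:
  assumes "null_sequence x \<alpha>"
  shows "path (inf_concat x \<alpha>)"
  using assms unfolding null_sequence_def loop_at_def
  by (intro inf_concat_path) auto

lemma inf_concat_start:
  assumes "null_sequence x \<alpha>"
  shows "pathstart (inf_concat x \<alpha>) = x" "pathfinish (inf_concat x \<alpha>) = x"
proof -
  have "inf_concat x \<alpha> 0 = \<alpha> 1 0" using inf_concat_seg[of 1 0 x \<alpha>] by simp
  then show "pathstart (inf_concat x \<alpha>) = x"
    using assms unfolding null_sequence_def loop_at_def pathstart_def by auto
  show "pathfinish (inf_concat x \<alpha>) = x" unfolding pathfinish_def inf_concat_def by simp
qed



lemma transfer:
  fixes x e :: "'a::topological_space"
  assumes pd: "pre_delta_monoid prd e" and nul: "null_sequence e \<alpha>"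
  shows "null_sequence x (\<lambda>n t. prd (\<alpha> n t) x)"
    and "inf_concat x (\<lambda>n t. prd (\<alpha> n t) x) = (\<lambda>t. prd (inf_concat e \<alpha> t) x)"
proof -
  have ide: "\<And>a. prd e a = a" using pd unfolding pre_delta_monoid_def by blast
  have pdp: "\<And>\<alpha> \<beta>. path \<alpha> \<Longrightarrow> path \<beta> \<Longrightarrow> path (\<lambda>t. prd (\<alpha> t) (\<beta> t))"
    using pd unfolding pre_delta_monoid_def by blast
  have pc: "path (\<lambda>t::real. x)" unfolding path_def by (rule continuous_on_const)
  have lp: "\<And>n. n \<ge> 1 \<Longrightarrow> loop_at e (\<alpha> n)" using nul unfolding null_sequence_def by blast
  let ?A = "inf_concat e \<alpha>"
  have Ap: "path ?A" by (rule null_path[OF nul])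
  have Axp: "path (\<lambda>t. prd (?A t) x)" using pdp[OF Ap pc] .
  have loops: "\<forall>n\<ge>1. loop_at x (\<lambda>t. prd (\<alpha> n t) x)"
  proof (intro allI impI)
    fix n :: nat assume n: "n \<ge> 1"
    have "path (\<alpha> n)" "pathstart (\<alpha> n) = e" "pathfinish (\<alpha> n) = e" using lp[OF n] unfolding loop_at_def by auto
    then show "loop_at x (\<lambda>t. prd (\<alpha> n t) x)" unfolding loop_at_def
      using pdp[OF _ pc, of "\<alpha> n"] ide by (auto simp: pathstart_def pathfinish_def)
  qed
  have ev: "\<forall>\<^sub>F n in sequentially. path_image (\<lambda>t. prd (\<alpha> n t) x) \<subseteq> U" if U: "open U" "x \<in> U" for U
  proof -
    have x1: "prd (?A 1) x \<in> U" using U ide by (simp add: inf_concat_def)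
    obtain A' where A': "open A'" "1 \<in> A'" "\<forall>y\<in>{0..1}. y \<in> A' \<longrightarrow> prd (?A y) x \<in> U"
    proof -
      have one: "(1::real) \<in> {0..1}" by simp
      show ?thesis using Axp[unfolded path_def continuous_on_topological, rule_format, OF one U(1) x1] that by blast
    qed
    obtain r where r: "r > 0" "ball 1 r \<subseteq> A'" using A' open_contains_ball by blast
    obtain N where N: "N > 0" "inverse (real N) < r" using ex_inverse_of_nat_less[OF r(1)] by blast
    show ?thesis unfolding eventually_sequentially
    proof (intro exI[of _ N] allI impI)
      fix n assume nN: "N \<le> n"
      then have n: "n \<ge> 1" using N by simp
      have np: "real n > 0" using n by simp
      have c: "\<alpha> n 1 = \<alpha> (Suc n) 0"
        using lp[OF n] lp[of "Suc n"] n unfolding loop_at_def pathstart_def pathfinish_def by auto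
      show "path_image (\<lambda>t. prd (\<alpha> n t) x) \<subseteq> U"
      proof
        fix z assume "z \<in> path_image (\<lambda>t. prd (\<alpha> n t) x)"
        then obtain t where t: "t \<in> {0..1}" "z = prd (\<alpha> n t) x" unfolding path_image_def by auto
        define y where "y = (real n - 1) / real n + t / (real n * (real n + 1))"
        have q: "real n * (real n + 1) > 0" using np by simp
        have tq: "t / (real n * (real n + 1)) \<le> 1 / (real n * (real n + 1))"
          using t q by (intro divide_right_mono) auto
        have "1 / (real n * (real n + 1)) \<le> 1 / real n" using np by (simp add: divide_simps)
        have y0: "0 \<le> y" unfolding y_def using n t by simp
        have "(real n - 1) / real n + 1 / (real n * (real n + 1)) = real n / (real n + 1)"
          using np by (simp add: divide_simps) (simp add: algebra_simps)
        then have y1: "y \<le> real n / (real n + 1)" unfolding y_def using tq by linarith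
        have "real n / (real n + 1) < 1" by simp
        then have y1': "y \<le> 1" using y1 by linarith
        have "1 - y \<le> 1 / real n"
        proof -
          have "1 - (real n - 1) / real n = 1 / real n" using np by (simp add: divide_simps)
          moreover have "t / (real n * (real n + 1)) \<ge> 0" using t q by simp
          ultimately show ?thesis unfolding y_def by linarith
        qed
        moreover have "1 / real n \<le> inverse (real N)" using nN N by (simp add: divide_simps)
        ultimately have "dist 1 y < r" using N y1' by (simp add: dist_real_def)
        then have "y \<in> A'" using r by auto
        then have "prd (?A y) x \<in> U" using A'(3) y0 y1' by auto
        moreover have "?A y = \<alpha> n t" unfolding y_def using inf_concat_seg1[OF n _ _ c, of t e] t by auto
        ultimately show "z \<in> U" using t by simp
      qed
    qed
  qed
  show "null_sequence x (\<lambda>n t. prd (\<alpha> n t) x)" unfolding null_sequence_def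
    using loops ev by blast
  show "inf_concat x (\<lambda>n t. prd (\<alpha> n t) x) = (\<lambda>t. prd (inf_concat e \<alpha> t) x)"
    by (rule ext) (simp add: inf_concat_def Let_def ide)
qed

theorem mainTheorem13:
  fixes prd :: "'a::topological_space \<Rightarrow> 'a \<Rightarrow> 'a" and e :: 'a
  assumes "pre_delta_monoid prd e"
    and "path_connected (UNIV :: 'a set)"
    and "\<not> wd_inf_pi1_products e"
  shows "\<forall>x::'a. \<not> wd_inf_pi1_products x"
proof (intro allI notI)
  fix x :: 'a assume wdx: "wd_inf_pi1_products x"
  note pd = assms(1)
  have ide: "\<And>a. prd e a = a" using pd unfolding pre_delta_monoid_def by blast
  obtain \<alpha> \<beta> where ab: "null_sequence e \<alpha>" "null_sequence e \<beta>"
    "\<forall>n\<ge>1. homotopic_paths UNIV (\<alpha> n) (\<beta> n)"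
    "\<not> homotopic_paths UNIV (inf_concat e \<alpha>) (inf_concat e \<beta>)"
    using assms(3) unfolding wd_inf_pi1_products_def by blast
  obtain \<gamma> where \<gamma>: "path \<gamma>" "pathstart \<gamma> = e" "pathfinish \<gamma> = x"
    using assms(2) unfolding path_connected_def by blast
  let ?A = "inf_concat e \<alpha>" and ?B = "inf_concat e \<beta>"
  let ?Ax = "\<lambda>t. prd (?A t) x" and ?Bx = "\<lambda>t. prd (?B t) x"
  have hx: "homotopic_paths UNIV ?Ax ?Bx"
  proof -
    have "homotopic_paths UNIV (inf_concat x (\<lambda>n t. prd (\<alpha> n t) x)) (inf_concat x (\<lambda>n t. prd (\<beta> n t) x))"
      using wdx unfolding wd_inf_pi1_products_def
      using transfer(1)[OF pd ab(1), of x] transfer(1)[OF pd ab(2), of x]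
        hp_mult_right[OF pd, of _ _ x] ab(3) by blast
    then show ?thesis unfolding transfer(2)[OF pd ab(1)] transfer(2)[OF pd ab(2)] .
  qed
  have Ap: "path ?A" "pathstart ?A = e" "pathfinish ?A = e"
    using null_path[OF ab(1)] inf_concat_start[OF ab(1)] by auto
  have Bp: "path ?B" "pathstart ?B = e" "pathfinish ?B = e"
    using null_path[OF ab(2)] inf_concat_start[OF ab(2)] by auto
  have Bxp: "path ?Bx" "pathstart ?Bx = x" "pathfinish ?Bx = x"
    using hx homotopic_paths_imp_path Bp ide by (auto simp: pathstart_def pathfinish_def)
  have Axp: "pathfinish ?Ax = x"
    using Ap ide by (auto simp: pathstart_def pathfinish_def)
  have Axp: "path ?Ax" "pathstart ?Ax = x" "pathfinish ?Ax = x"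
    using hx homotopic_paths_imp_path Ap ide by (auto simp: pathstart_def pathfinish_def)
  have g0: "\<gamma> 0 = e" "\<gamma> 1 = x" using \<gamma> by (auto simp: pathstart_def pathfinish_def)
  have A01: "?A 0 = e" "?A 1 = e" using Ap by (auto simp: pathstart_def pathfinish_def)
  have B01: "?B 0 = e" "?B 1 = e" using Bp by (auto simp: pathstart_def pathfinish_def)
  have "homotopic_paths UNIV ?A (\<gamma> +++ (?Ax +++ reversepath \<gamma>))"
    using conj_hom[OF pd Ap(1) A01 \<gamma>(1) g0(1)] g0 by simp
  also have "homotopic_paths UNIV (\<gamma> +++ (?Ax +++ reversepath \<gamma>)) (\<gamma> +++ (?Bx +++ reversepath \<gamma>))"
    using \<gamma> Axp hx path_reversepath[of \<gamma>] by (intro homotopic_paths_join) (auto simp: pathstart_def pathfinish_def joinpaths_def reversepath_def)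
  also have "homotopic_paths UNIV (\<gamma> +++ (?Bx +++ reversepath \<gamma>)) ?B"
    using conj_hom[OF pd Bp(1) B01 \<gamma>(1) g0(1)] g0 by (simp add: homotopic_paths_sym)
  finally have "homotopic_paths UNIV ?A ?B" .
  then show False using ab(4) by simp
qed


end
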